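(* Let $\Lambda\subseteq\mathbb Z^D$ be a lattice that induces a lattice tiling of each of two shapes $\mathcal S$ and $\mathcal S'$, and let $\delta$ be a nonzero ternary vector. Then $(\Lambda,\mathcal S,\delta)$ defines a folding if and only if $(\Lambda,\mathcal S',\delta)$ defines a folding.
   Context: Let $D\ge 1$. A shape is a finite nonempty set $\mathcal S\subset\mathbb Z^D$ containing the origin; the origin is its distinguished center point. A lattice is a set $\Lambda=\{\sum_{j=1}^D u_jv_j : u_1,\dots,u_D\in\mathbb Z\}$ for linearly independent $v_1,\dots,v_D\in\mathbb Z^D$. $\Lambda$ induces a lattice tiling of $\mathcal S$ if the translates $\mathcal S+\lambda$, $\lambda\in\Lambda$, are pairwise disjoint and cover $\mathbb Z^D$. The translate $\mathcal S+\lambda$ is called the copy of $\mathcal S$ with center $\lambda$. For $x\in\mathbb Z^D$, $c(x)$ denotes the unique $\lambda\in\Lambda$ with $x\in\mathcal S+\lambda$. A ternary vector (direction) is a nonzero $\delta\in\{-1,0,+1\}^D$. The folded-row of $(\Lambda,\mathcal S,\delta)$ is the sequence $p_0,p_1,p_2,\dots$ defined by $p_0=0$ and $p_{k+1}=(p_k+\delta)-c(p_k+\delta)$. Equivalently, $p_{k+1}=p_k+\delta$ if $p_k+\delta\in\mathcal S$; otherwise $p_{k+1}$ is $p_k+\delta$ minus the center of the copy of $\mathcal S$ containing $p_k+\delta$. The triple $(\Lambda,\mathcal S,\delta)$ defines a folding if every element of $\mathcal S$ occurs in its folded-row. *)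

theory Defs
  imports "HOL-Analysis.Analysis"
begin

text \<open>Points of Z^D are vectors int ^ 'n, where the finite type 'n has D = CARD('n) elements.\<close>

definition int_lin_indep :: "('n::finite \<Rightarrow> int ^ 'n) \<Rightarrow> bool" where
  "int_lin_indep v \<longleftrightarrow>
     (\<forall>c :: 'n \<Rightarrow> real.
        (\<Sum>j\<in>UNIV. c j *\<^sub>R (\<chi> i. real_of_int (v j $ i))) = 0 \<longrightarrow> (\<forall>j. c j = 0))"

definition is_lattice :: "(int ^ 'n::finite) set \<Rightarrow> bool" where
  "is_lattice L \<longleftrightarrow>
     (\<exists>v :: 'n \<Rightarrow> int ^ 'n. int_lin_indep v \<and>
        L = {\<Sum>j\<in>UNIV. u j *s v j | u :: 'n \<Rightarrow> int. True})"

definition is_shape :: "(int ^ 'n::finite) set \<Rightarrow> bool" where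
  "is_shape S \<longleftrightarrow> finite S \<and> S \<noteq> {} \<and> 0 \<in> S"

definition lattice_tiling :: "(int ^ 'n::finite) set \<Rightarrow> (int ^ 'n) set \<Rightarrow> bool" where
  "lattice_tiling L S \<longleftrightarrow>
     (\<forall>x. \<exists>l\<in>L. x \<in> (\<lambda>s. s + l) ` S) \<and>
     (\<forall>l\<in>L. \<forall>l'\<in>L. l \<noteq> l' \<longrightarrow> ((\<lambda>s. s + l) ` S) \<inter> ((\<lambda>s. s + l') ` S) = {})"

definition tile_center :: "(int ^ 'n::finite) set \<Rightarrow> (int ^ 'n) set \<Rightarrow> int ^ 'n \<Rightarrow> int ^ 'n" where
  "tile_center L S x = (THE l. l \<in> L \<and> x \<in> (\<lambda>s. s + l) ` S)"

definition ternary :: "int ^ 'n::finite \<Rightarrow> bool" where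
  "ternary d \<longleftrightarrow> d \<noteq> 0 \<and> (\<forall>i. d $ i \<in> {-1, 0, 1})"

primrec folded_row :: "(int ^ 'n::finite) set \<Rightarrow> (int ^ 'n) set \<Rightarrow> int ^ 'n \<Rightarrow> nat \<Rightarrow> int ^ 'n" where
  "folded_row L S d 0 = 0"
| "folded_row L S d (Suc k) =
     (folded_row L S d k + d) - tile_center L S (folded_row L S d k + d)"

definition defines_folding :: "(int ^ 'n::finite) set \<Rightarrow> (int ^ 'n) set \<Rightarrow> int ^ 'n \<Rightarrow> bool" where
  "defines_folding L S d \<longleftrightarrow> (\<forall>s\<in>S. \<exists>k. folded_row L S d k = s)"

end

theory Submission
  imports Defs
begin

lemma lat_diff:
  fixes L :: "(int ^ 'n::finite) set"
  assumes "is_lattice L" "a \<in> L" "b \<in> L" shows "a - b \<in> L"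
proof -
  from assms(1) obtain v where L: "L = {\<Sum>j\<in>UNIV. u j *s v j | u :: 'n \<Rightarrow> int. True}"
    unfolding is_lattice_def by blast
  from assms(2,3) obtain u u' where a: "a = (\<Sum>j\<in>UNIV. u j *s v j)" and b: "b = (\<Sum>j\<in>UNIV. u' j *s v j)"
    unfolding L by blast
  have "a - b = (\<Sum>j\<in>UNIV. (u j - u' j) *s v j)"
    unfolding a b sum_subtractf[symmetric] by (simp add: vector_ssub_ldistrib vec_eq_iff algebra_simps)
  thus ?thesis unfolding L by (auto intro!: exI[where x="\<lambda>j. u j - u' j"])
qed

lemma lat_zero: fixes L :: "(int ^ 'n::finite) set" assumes "is_lattice L" shows "0 \<in> L"
proof -
  from assms(1) obtain v where L: "L = {\<Sum>j\<in>UNIV. u j *s v j | u :: 'n \<Rightarrow> int. True}"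
    unfolding is_lattice_def by blast
  have "0 = (\<Sum>j\<in>UNIV. (\<lambda>_. 0::int) j *s v j)" by simp
  thus ?thesis unfolding L by (auto intro!: exI[where x="\<lambda>_. 0::int"])
qed

lemma lat_add: assumes "is_lattice L" "a \<in> L" "b \<in> L" shows "a + b \<in> L"
proof -
  have "0 - b \<in> L" using lat_diff lat_zero assms by blast
  hence "a - (0 - b) \<in> L" using lat_diff assms by blast
  thus ?thesis by simp
qed

lemma tc:
  assumes "lattice_tiling L S"
  shows "tile_center L S x \<in> L \<and> x - tile_center L S x \<in> S"
proof -
  have ex: "\<exists>!l. l \<in> L \<and> x \<in> (\<lambda>s. s + l) ` S"
    using assms unfolding lattice_tiling_def by blast
  have "tile_center L S x \<in> L \<and> x \<in> (\<lambda>s. s + tile_center L S x) ` S"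
    unfolding tile_center_def by (rule theI'[OF ex])
  moreover have "\<forall>l. x \<in> (\<lambda>s. s + l) ` S \<longrightarrow> x - l \<in> S" by auto
  ultimately show ?thesis by blast
qed

lemma uniq:
  assumes "is_lattice L" "lattice_tiling L S" "p \<in> S" "s \<in> S" "p - s \<in> L"
  shows "p = s"
proof (rule ccontr)
  assume ne: "p \<noteq> s"
  have "p \<in> (\<lambda>t. t + (p - s)) ` S" using assms(4) by force
  moreover have "p \<in> (\<lambda>t. t + 0) ` S" using assms(3) by force
  moreover have "p - s \<noteq> 0" using ne by simp
  ultimately show False using assms(2,5) lat_zero[OF assms(1)]
    unfolding lattice_tiling_def by blast
qed

lemma fr:
  assumes "is_lattice L" "lattice_tiling L S" "0 \<in> S"
  shows "folded_row L S d k \<in> S \<and> (of_nat k :: int) *s d - folded_row L S d k \<in> L"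
proof (induction k)
  case 0
  thus ?case using lat_zero[OF assms(1)] assms(3) by simp
next
  case (Suc k)
  let ?p = "folded_row L S d k"
  let ?c = "tile_center L S (?p + d)"
  have c: "?c \<in> L" "?p + d - ?c \<in> S" using tc[OF assms(2)] by auto
  have e1: "(of_nat (Suc k) :: int) *s d = (of_nat k :: int) *s d + d"
    by (simp add: vec_eq_iff distrib_right)
  have e2: "\<And>a::int^'a. a + d - (?p + d - ?c) = (a - ?p) + ?c"
    by (simp add: algebra_simps)
  have "(of_nat (Suc k) :: int) *s d - (?p + d - ?c) = ((of_nat k :: int) *s d - ?p) + ?c"
    unfolding e1 by (rule e2)
  moreover have "((of_nat k :: int) *s d - ?p) + ?c \<in> L"
    using lat_add[OF assms(1)] Suc c(1) by blast
  ultimately have "(of_nat (Suc k) :: int) *s d - (?p + d - ?c) \<in> L" by metis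
  thus ?case using c(2) by (simp only: folded_row.simps)
qed

lemma char:
  assumes "is_lattice L" "lattice_tiling L S" "0 \<in> S"
  shows "defines_folding L S d \<longleftrightarrow> (\<forall>x. \<exists>k::nat. (of_nat k :: int) *s d - x \<in> L)"
proof
  assume f: "defines_folding L S d"
  show "\<forall>x. \<exists>k::nat. (of_nat k :: int) *s d - x \<in> L"
  proof
    fix x
    obtain l where l: "l \<in> L" "x \<in> (\<lambda>s. s + l) ` S"
      using assms(2) unfolding lattice_tiling_def by blast
    then obtain s where s: "s \<in> S" "x = s + l" by blast
    obtain k where "folded_row L S d k = s" using f s(1) unfolding defines_folding_def by blast
    hence "(of_nat k :: int) *s d - s \<in> L" using fr[OF assms] by blast
    hence "((of_nat k :: int) *s d - s) - l \<in> L" using lat_diff[OF assms(1) _ l(1)] by blast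
    moreover have "((of_nat k :: int) *s d - s) - l = (of_nat k :: int) *s d - x"
      using s(2) by simp
    ultimately show "\<exists>k::nat. (of_nat k :: int) *s d - x \<in> L" by metis
  qed
next
  assume h: "\<forall>x. \<exists>k::nat. (of_nat k :: int) *s d - x \<in> L"
  show "defines_folding L S d" unfolding defines_folding_def
  proof
    fix s assume s: "s \<in> S"
    obtain k where k: "(of_nat k :: int) *s d - s \<in> L" using h by blast
    have p: "folded_row L S d k \<in> S" "(of_nat k :: int) *s d - folded_row L S d k \<in> L"
      using fr[OF assms] by auto
    have "((of_nat k :: int) *s d - s) - ((of_nat k :: int) *s d - folded_row L S d k) \<in> L"
      using lat_diff[OF assms(1) k p(2)] .
    hence "folded_row L S d k - s \<in> L" by simp
    hence "folded_row L S d k = s" using uniq[OF assms(1,2) p(1) s] by blast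
    thus "\<exists>k. folded_row L S d k = s" by blast
  qed
qed

theorem mainTheorem3:
  fixes L :: "(int ^ 'n::finite) set" and S S' :: "(int ^ 'n) set" and d :: "int ^ 'n"
  assumes "is_lattice L"
    and "is_shape S" and "is_shape S'"
    and "lattice_tiling L S" and "lattice_tiling L S'"
    and "ternary d"
  shows "defines_folding L S d \<longleftrightarrow> defines_folding L S' d"
  using char[OF assms(1,4)] char[OF assms(1,5)] assms(2,3) unfolding is_shape_def by simp

end
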